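(* Let $(A,W)$ be a Pratt comonoid, $x_0\supseteq x_1\supseteq\cdots$ an $\omega$-indexed descending chain of elements of $W$, and $y_0\subseteq y_1\subseteq\cdots$ an $\omega$-indexed ascending chain of elements of $W$, such that either $\bigcap_{n\in\omega}x_n=\emptyset$ or $\bigcup_{n\in\omega}y_n=A$. Then $\bigcup_{n\in\omega}(x_n\cap y_n)\in W$.
   Context: A Pratt comonoid is a pair $(A,W)$ where $A$ is a set and $W$ is a set of subsets of $A$ such that (i) $\emptyset\in W$ and $A\in W$; (ii) whenever $C\subseteq A\times A$ is such that for every $a\in A$ both the $a$-th row $\{b\mid (a,b)\in C\}$ and the $a$-th column $\{b\mid (b,a)\in C\}$ belong to $W$ (a crossword over $W$), the diagonal $\{b\mid (b,b)\in C\}$ also belongs to $W$. *)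

theory Defs
  imports Main
begin

definition crossword :: "'a set \<Rightarrow> 'a set set \<Rightarrow> ('a \<times> 'a) set \<Rightarrow> bool" where
  "crossword A W C \<longleftrightarrow> C \<subseteq> A \<times> A \<and>
     (\<forall>a\<in>A. {b. (a, b) \<in> C} \<in> W \<and> {b. (b, a) \<in> C} \<in> W)"

definition pratt_comonoid :: "'a set \<Rightarrow> 'a set set \<Rightarrow> bool" where
  "pratt_comonoid A W \<longleftrightarrow> W \<subseteq> Pow A \<and> {} \<in> W \<and> A \<in> W \<and>
     (\<forall>C. crossword A W C \<longrightarrow> {b. (b, b) \<in> C} \<in> W)"

end

theory Submission
  imports Defs
begin

theorem lemma7p2:
  fixes A :: "'a set" and W :: "'a set set" and x y :: "nat \<Rightarrow> 'a set"
  assumes "pratt_comonoid A W"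
    and "\<And>n. x n \<in> W" and "\<And>n. x (Suc n) \<subseteq> x n"
    and "\<And>n. y n \<in> W" and "\<And>n. y n \<subseteq> y (Suc n)"
    and "(\<Inter>n. x n) = {} \<or> (\<Union>n. y n) = A"
  shows "(\<Union>n. x n \<inter> y n) \<in> W"
proof -
  have P: "W \<subseteq> Pow A" "{} \<in> W" "A \<in> W"
    "\<And>C. crossword A W C \<Longrightarrow> {b. (b, b) \<in> C} \<in> W"
    using assms(1) unfolding pratt_comonoid_def by auto
  have xA: "x n \<subseteq> A" for n using P(1) assms(2) by blast
  have yA: "y n \<subseteq> A" for n using P(1) assms(4) by blast
  have xm: "n \<le> m \<Longrightarrow> x m \<subseteq> x n" for n m
    using lift_Suc_antimono_le[of x, OF assms(3)] by blast
  have ym: "n \<le> m \<Longrightarrow> y n \<subseteq> y m" for n m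
    using lift_Suc_mono_le[of y, OF assms(5)] by blast
  define C where "C = {(a,b). a \<in> A \<and> b \<in> A \<and> (\<exists>n. a \<in> x n \<and> b \<in> y n)}"
  have "crossword A W C"
    unfolding crossword_def
  proof (intro conjI ballI)
    show "C \<subseteq> A \<times> A" unfolding C_def by auto
  next
    fix a assume a: "a \<in> A"
    show "{b. (a, b) \<in> C} \<in> W"
    proof (cases "\<exists>k. a \<notin> x k")
      case False
      then have "(\<Inter>n. x n) \<noteq> {}" by blast
      then have U: "(\<Union>n. y n) = A" using assms(6) by blast
      have "{b. (a, b) \<in> C} = A" using False a U unfolding C_def by auto
      then show ?thesis using P(3) by simp
    next
      case True
      define k where "k = (LEAST k. a \<notin> x k)"
      have k1: "a \<notin> x k" unfolding k_def using True by (metis LeastI)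
      have k2: "n < k \<Longrightarrow> a \<in> x n" for n unfolding k_def using not_less_Least by blast
      have iff: "a \<in> x n \<longleftrightarrow> n < k" for n
        using k1 k2 xm[of k n] by (meson not_less subsetD)
      show ?thesis
      proof (cases k)
        case 0
        then have "{b. (a, b) \<in> C} = {}" using iff unfolding C_def by auto
        then show ?thesis using P(2) by simp
      next
        case (Suc j)
        have "{b. (a, b) \<in> C} = y j"
        proof
          show "{b. (a, b) \<in> C} \<subseteq> y j"
            using iff ym Suc unfolding C_def by (auto simp: less_Suc_eq_le)
          show "y j \<subseteq> {b. (a, b) \<in> C}"
            using iff Suc a yA unfolding C_def by auto
        qed
        then show ?thesis using assms(4) by simp
      qed
    qed
    show "{b. (b, a) \<in> C} \<in> W"
    proof (cases "\<exists>m. a \<in> y m")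
      case False
      then have "{b. (b, a) \<in> C} = {}" unfolding C_def by auto
      then show ?thesis using P(2) by simp
    next
      case True
      define m where "m = (LEAST m. a \<in> y m)"
      have m1: "a \<in> y m" unfolding m_def using True by (metis LeastI)
      have m2: "n < m \<Longrightarrow> a \<notin> y n" for n unfolding m_def using not_less_Least by blast
      have iff: "a \<in> y n \<longleftrightarrow> m \<le> n" for n
        using m1 m2 ym[of m n] by (meson not_less subsetD)
      have "{b. (b, a) \<in> C} = x m"
      proof
        show "{b. (b, a) \<in> C} \<subseteq> x m"
          using iff xm unfolding C_def by blast
        show "x m \<subseteq> {b. (b, a) \<in> C}"
          using iff a xA unfolding C_def by auto
      qed
      then show ?thesis using assms(2) by simp
    qed
  qed
  then have "{b. (b, b) \<in> C} \<in> W" by (rule P(4))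
  moreover have "{b. (b, b) \<in> C} = (\<Union>n. x n \<inter> y n)"
    unfolding C_def using xA by auto
  ultimately show ?thesis by simp
qed

end
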